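(* Assume that the following hold: (i) there exist positive finite constants $g_1,g_2$ such that for all large enough $r$, $\mathbb{E}[X_r]\in\mu r+[-g_1r^{1/3},-g_2r^{1/3}]$; (ii) there exist constants $\delta>0$, $C>0$, $r_1$ such that for all $r>r_1$, $\mathbb{P}(X_r-\mu r>Cr^{1/3})\ge\delta$. Then there exist constants $c>0$, $\eta>0$, $\theta_0$ and $r_0$ such that for all $r>r_0$ and $\theta_0<\theta<\eta r^{2/3}$, $$\mathbb{P}\left(X_r-\mathbb{E}[X_r]\ge\theta r^{1/3}\right)\ge\exp\left(-c\theta^{3/2}\right).$$
   Context: Let $\{\xi_v:v\in\mathbb{Z}^2\}$ be i.i.d. random variables with a common law $\nu$ supported on $[0,\infty)$. A directed path is an up-right nearest-neighbour path in $\mathbb{Z}^2$, and its weight is $\ell(\gamma)=\sum_{u\in\gamma}\xi_u$. For $u\preceq v$ coordinatewise, $X_{u,v}=\max_{\gamma:u\to v}\ell(\gamma)$ over directed paths from $u$ to $v$. For $r\in\mathbb{N}$, $X_r=X_{(1,1),(r,r)}$. It is assumed that $\mu=\lim_{r\to\infty}r^{-1}\mathbb{E}[X_r]<\infty$. *)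

theory Defs
  imports "HOL-Probability.Probability"
begin

type_synonym vertex = "int \<times> int"

definition up_right_step :: "vertex \<Rightarrow> vertex \<Rightarrow> bool" where
  "up_right_step u v \<longleftrightarrow> v = (fst u + 1, snd u) \<or> v = (fst u, snd u + 1)"

definition directed_paths :: "vertex \<Rightarrow> vertex \<Rightarrow> vertex list set" where
  "directed_paths u v = {\<gamma>. \<gamma> \<noteq> [] \<and> hd \<gamma> = u \<and> last \<gamma> = v \<and>
      (\<forall>i. i + 1 < length \<gamma> \<longrightarrow> up_right_step (\<gamma> ! i) (\<gamma> ! (i + 1)))}"

text \<open>Weight of a path: sum of the vertex weights (vertices of a directed path are distinct).\<close>
definition path_weight :: "(vertex \<Rightarrow> real) \<Rightarrow> vertex list \<Rightarrow> real" where
  "path_weight \<xi> \<gamma> = sum_list (map \<xi> \<gamma>)"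

definition lpp :: "(vertex \<Rightarrow> real) \<Rightarrow> vertex \<Rightarrow> vertex \<Rightarrow> real" where
  "lpp \<xi> u v = Max (path_weight \<xi> ` directed_paths u v)"

definition X :: "nat \<Rightarrow> (vertex \<Rightarrow> real) \<Rightarrow> real" where
  "X r \<xi> = lpp \<xi> (1, 1) (int r, int r)"

definition env :: "real measure \<Rightarrow> (vertex \<Rightarrow> real) measure" where
  "env \<nu> = PiM UNIV (\<lambda>_. \<nu>)"

end

theory Submission
  imports Defs
begin


definition vbox :: "vertex \<Rightarrow> vertex \<Rightarrow> vertex set" where
  "vbox u v = {fst u..fst v} \<times> {snd u..snd v}"

lemma dp_mono:
  assumes "\<gamma> \<in> directed_paths u v"
  shows "i + d < length \<gamma> \<Longrightarrow> fst (\<gamma>!i) \<le> fst (\<gamma>!(i+d)) \<and> snd (\<gamma>!i) \<le> snd (\<gamma>!(i+d))"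
proof (induction d)
  case 0 then show ?case by simp
next
  case (Suc d)
  then have "up_right_step (\<gamma>!(i+d)) (\<gamma>!(i+d+1))"
    using assms unfolding directed_paths_def by auto
  with Suc show ?case unfolding up_right_step_def by auto
qed

lemma dp_sum:
  assumes "\<gamma> \<in> directed_paths u v"
  shows "i < length \<gamma> \<Longrightarrow> fst (\<gamma>!i) + snd (\<gamma>!i) = fst u + snd u + int i"
proof (induction i)
  case 0 then show ?case using assms unfolding directed_paths_def by (auto simp: hd_conv_nth)
next
  case (Suc i)
  then have "up_right_step (\<gamma>!i) (\<gamma>!(i+1))"
    using assms unfolding directed_paths_def by auto
  with Suc show ?case unfolding up_right_step_def by auto
qed

lemma dp_box:
  assumes "\<gamma> \<in> directed_paths u v"
  shows "set \<gamma> \<subseteq> vbox u v"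
proof
  fix p assume "p \<in> set \<gamma>"
  then obtain i where i: "i < length \<gamma>" "p = \<gamma>!i" by (auto simp: in_set_conv_nth)
  have ne: "\<gamma> \<noteq> []" and h: "\<gamma>!0 = u" and l: "\<gamma>!(length \<gamma> - 1) = v"
    using assms unfolding directed_paths_def by (auto simp: hd_conv_nth last_conv_nth)
  have "fst (\<gamma>!(0+i)) \<ge> fst (\<gamma>!0) \<and> snd (\<gamma>!(0+i)) \<ge> snd (\<gamma>!0)"
    using dp_mono[OF assms, of 0 i] i by simp
  moreover have "fst (\<gamma>!(i + (length \<gamma> - 1 - i))) \<ge> fst (\<gamma>!i) \<and> snd (\<gamma>!(i + (length \<gamma> - 1 - i))) \<ge> snd (\<gamma>!i)"
    using dp_mono[OF assms, of i "length \<gamma> - 1 - i"] i by simp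
  moreover have "i + (length \<gamma> - 1 - i) = length \<gamma> - 1" using i by simp
  ultimately show "p \<in> vbox u v" using h l i unfolding vbox_def mem_Times_iff by auto
qed

lemma dp_length:
  assumes "\<gamma> \<in> directed_paths u v"
  shows "length \<gamma> = nat (fst v + snd v - fst u - snd u) + 1"
proof -
  have ne: "\<gamma> \<noteq> []" and l: "\<gamma>!(length \<gamma> - 1) = v"
    using assms unfolding directed_paths_def by (auto simp: hd_conv_nth last_conv_nth)
  have "fst v + snd v = fst u + snd u + int (length \<gamma> - 1)"
    using dp_sum[OF assms, of "length \<gamma> - 1"] ne l by simp
  then show ?thesis using ne by (cases \<gamma>) auto
qed

lemma finite_box: "finite (vbox u v)" unfolding vbox_def by simp

lemma dp_finite: "finite (directed_paths u v)"
proof (rule finite_subset)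
  show "directed_paths u v \<subseteq> {xs. set xs \<subseteq> vbox u v \<and> length xs = nat (fst v + snd v - fst u - snd u) + 1}"
    using dp_box dp_length by blast
  show "finite {xs. set xs \<subseteq> vbox u v \<and> length xs = nat (fst v + snd v - fst u - snd u) + 1}"
    by (rule finite_lists_length_eq[OF finite_box])
qed

lemma dp_single: "[u] \<in> directed_paths u u"
  unfolding directed_paths_def by auto

lemma dp_append:
  assumes g1: "\<gamma>1 \<in> directed_paths u v" and g2: "\<gamma>2 \<in> directed_paths v' w"
    and st: "up_right_step v v'"
  shows "\<gamma>1 @ \<gamma>2 \<in> directed_paths u w"
proof -
  have n1: "\<gamma>1 \<noteq> []" "hd \<gamma>1 = u" "last \<gamma>1 = v"
    and s1: "\<And>i. i + 1 < length \<gamma>1 \<Longrightarrow> up_right_step (\<gamma>1 ! i) (\<gamma>1 ! (i + 1))"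
    using g1 unfolding directed_paths_def by auto
  have n2: "\<gamma>2 \<noteq> []" "hd \<gamma>2 = v'" "last \<gamma>2 = w"
    and s2: "\<And>i. i + 1 < length \<gamma>2 \<Longrightarrow> up_right_step (\<gamma>2 ! i) (\<gamma>2 ! (i + 1))"
    using g2 unfolding directed_paths_def by auto
  have "up_right_step ((\<gamma>1 @ \<gamma>2) ! i) ((\<gamma>1 @ \<gamma>2) ! (i + 1))" if i: "i + 1 < length (\<gamma>1 @ \<gamma>2)" for i
  proof -
    consider "i + 1 < length \<gamma>1" | "i + 1 = length \<gamma>1" | "i \<ge> length \<gamma>1" by linarith
    then show ?thesis
    proof cases
      case 1 then show ?thesis using s1[OF 1] by (simp add: nth_append)
    next
      case 2
      then have "i = length \<gamma>1 - 1" by simp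
      then have "(\<gamma>1 @ \<gamma>2) ! i = v" using n1 2 by (simp add: nth_append last_conv_nth)
      moreover have "(\<gamma>1 @ \<gamma>2) ! (i+1) = v'" using 2 n2 by (simp add: nth_append hd_conv_nth)
      ultimately show ?thesis using st by simp
    next
      case 3
      then have "i - length \<gamma>1 + 1 < length \<gamma>2" using i by simp
      from s2[OF this] 3 show ?thesis
        by (simp add: nth_append Suc_diff_le)
    qed
  qed
  then show ?thesis using n1 n2 unfolding directed_paths_def by auto
qed

lemma dp_nonempty_aux:
  "\<forall>x' y'. x \<le> x' \<and> y \<le> y' \<and> nat (x' - x) + nat (y' - y) = n \<longrightarrow> directed_paths (x, y) (x', y') \<noteq> {}"
proof (induction n)
  case 0 then show ?case using dp_single by fastforce
next
  case (Suc n)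
  show ?case
  proof (intro allI impI)
    fix x' y' :: int assume a: "x \<le> x' \<and> y \<le> y' \<and> nat (x' - x) + nat (y' - y) = Suc n"
    show "directed_paths (x, y) (x', y') \<noteq> {}"
    proof (cases "x < x'")
      case True
      then have "x \<le> x' - 1 \<and> y \<le> y' \<and> nat (x' - 1 - x) + nat (y' - y) = n" using a by auto
      then have "directed_paths (x, y) (x' - 1, y') \<noteq> {}" using Suc.IH by blast
      then obtain \<gamma> where "\<gamma> \<in> directed_paths (x, y) (x' - 1, y')" by blast
      then have "\<gamma> @ [(x', y')] \<in> directed_paths (x, y) (x', y')"
        by (rule dp_append[OF _ dp_single]) (simp add: up_right_step_def)
      then show ?thesis by blast
    next
      case False
      then have "y < y'" using a by auto
      then have "x \<le> x' \<and> y \<le> y' - 1 \<and> nat (x' - x) + nat (y' - 1 - y) = n" using a False by auto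
      then have "directed_paths (x, y) (x', y' - 1) \<noteq> {}" using Suc.IH by blast
      then obtain \<gamma> where "\<gamma> \<in> directed_paths (x, y) (x', y' - 1)" by blast
      then have "\<gamma> @ [(x', y')] \<in> directed_paths (x, y) (x', y')"
        by (rule dp_append[OF _ dp_single]) (simp add: up_right_step_def)
      then show ?thesis by blast
    qed
  qed
qed

lemma dp_nonempty: "x \<le> x' \<Longrightarrow> y \<le> y' \<Longrightarrow> directed_paths (x, y) (x', y') \<noteq> {}"
  using dp_nonempty_aux by blast



lemma path_weight_append: "path_weight \<xi> (a @ b) = path_weight \<xi> a + path_weight \<xi> b"
  unfolding path_weight_def by simp

lemma lpp_ge:
  assumes "\<gamma> \<in> directed_paths u v"
  shows "path_weight \<xi> \<gamma> \<le> lpp \<xi> u v"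
  unfolding lpp_def using assms dp_finite by (intro Max_ge) auto

lemma lpp_attained:
  assumes "fst u \<le> fst v" "snd u \<le> snd v"
  shows "\<exists>\<gamma>\<in>directed_paths u v. lpp \<xi> u v = path_weight \<xi> \<gamma>"
proof -
  have "directed_paths u v \<noteq> {}" using dp_nonempty[of "fst u" "fst v" "snd u" "snd v"] assms by simp
  then have "lpp \<xi> u v \<in> path_weight \<xi> ` directed_paths u v"
    unfolding lpp_def using dp_finite by (intro Max_in) auto
  then show ?thesis by auto
qed

lemma lpp_superadd:
  fixes a b c :: int
  assumes "a \<le> b" "b < c" "\<xi> (b + 1, b) \<ge> 0"
  shows "lpp \<xi> (a, a) (b, b) + lpp \<xi> (b + 1, b + 1) (c, c) \<le> lpp \<xi> (a, a) (c, c)"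
proof -
  obtain \<gamma>1 where g1: "\<gamma>1 \<in> directed_paths (a, a) (b, b)" "lpp \<xi> (a, a) (b, b) = path_weight \<xi> \<gamma>1"
    using lpp_attained[of "(a,a)" "(b,b)"] assms by auto
  obtain \<gamma>2 where g2: "\<gamma>2 \<in> directed_paths (b+1, b+1) (c, c)" "lpp \<xi> (b+1, b+1) (c, c) = path_weight \<xi> \<gamma>2"
    using lpp_attained[of "(b+1,b+1)" "(c,c)"] assms by auto
  have "[(b+1, b)] @ \<gamma>2 \<in> directed_paths (b+1, b) (c, c)"
    by (rule dp_append[OF dp_single g2(1)]) (simp add: up_right_step_def)
  then have "\<gamma>1 @ ([(b+1, b)] @ \<gamma>2) \<in> directed_paths (a, a) (c, c)"
    by (rule dp_append[OF g1(1)]) (simp add: up_right_step_def)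
  then have "path_weight \<xi> (\<gamma>1 @ ([(b+1, b)] @ \<gamma>2)) \<le> lpp \<xi> (a, a) (c, c)" by (rule lpp_ge)
  moreover have "path_weight \<xi> (\<gamma>1 @ ([(b+1, b)] @ \<gamma>2)) = path_weight \<xi> \<gamma>1 + \<xi> (b+1, b) + path_weight \<xi> \<gamma>2"
    by (simp add: path_weight_append) (simp add: path_weight_def)
  ultimately show ?thesis using g1 g2 assms by simp
qed

definition shd :: "int \<Rightarrow> vertex \<Rightarrow> vertex" where "shd d p = (fst p + d, snd p + d)"

lemma shd_step: "up_right_step (shd d p) (shd d q) \<longleftrightarrow> up_right_step p q"
  unfolding up_right_step_def shd_def by (cases p; cases q) auto

lemma shd_inv: "shd (-d) (shd d p) = p" unfolding shd_def by simp

lemma dp_map_shd: "\<gamma> \<in> directed_paths u v \<Longrightarrow> map (shd d) \<gamma> \<in> directed_paths (shd d u) (shd d v)"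
  unfolding directed_paths_def by (auto simp: hd_map last_map shd_step)

lemma dp_shift: "directed_paths (shd d u) (shd d v) = map (shd d) ` directed_paths u v"
proof
  show "map (shd d) ` directed_paths u v \<subseteq> directed_paths (shd d u) (shd d v)"
    using dp_map_shd by blast
  show "directed_paths (shd d u) (shd d v) \<subseteq> map (shd d) ` directed_paths u v"
  proof
    fix \<gamma> assume "\<gamma> \<in> directed_paths (shd d u) (shd d v)"
    then have "map (shd (-d)) \<gamma> \<in> directed_paths u v"
      using dp_map_shd[of \<gamma> "shd d u" "shd d v" "-d"] by (simp add: shd_inv)
    moreover have "\<gamma> = map (shd d) (map (shd (-d)) \<gamma>)"
      by (induction \<gamma>) (auto simp: shd_def)
    ultimately show "\<gamma> \<in> map (shd d) ` directed_paths u v" by blast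
  qed
qed

lemma lpp_shift: "lpp \<xi> (shd d u) (shd d v) = lpp (\<xi> \<circ> shd d) u v"
proof -
  have "path_weight \<xi> ` directed_paths (shd d u) (shd d v) = path_weight (\<xi> \<circ> shd d) ` directed_paths u v"
    unfolding dp_shift image_image path_weight_def by simp
  then show ?thesis unfolding lpp_def by simp
qed

lemma lpp_cong:
  assumes "\<And>p. p \<in> vbox u v \<Longrightarrow> \<xi> p = \<xi>' p"
  shows "lpp \<xi> u v = lpp \<xi>' u v"
proof -
  have "path_weight \<xi> \<gamma> = path_weight \<xi>' \<gamma>" if "\<gamma> \<in> directed_paths u v" for \<gamma>
    using dp_box[OF that] assms unfolding path_weight_def
    by (metis (no_types, lifting) map_eq_conv subsetD)
  then have "path_weight \<xi> ` directed_paths u v = path_weight \<xi>' ` directed_paths u v"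
    by (rule image_cong[OF refl])
  then show ?thesis unfolding lpp_def by simp
qed

lemma path_weight_meas:
  assumes "sets \<nu> = sets borel" "set \<gamma> \<subseteq> K"
  shows "(\<lambda>\<xi>. path_weight \<xi> \<gamma>) \<in> borel_measurable (PiM K (\<lambda>_. \<nu>))"
  using assms(2)
proof (induction \<gamma>)
  case Nil then show ?case by (simp add: path_weight_def)
next
  case (Cons a \<gamma>)
  have "(\<lambda>\<xi>. \<xi> a) \<in> measurable (PiM K (\<lambda>_. \<nu>)) \<nu>"
    using Cons by (intro measurable_component_singleton) auto
  then have m: "(\<lambda>\<xi>. \<xi> a) \<in> borel_measurable (PiM K (\<lambda>_. \<nu>))"
    using assms(1) by (simp add: measurable_cong_sets[OF refl assms(1)])
  have "(\<lambda>\<xi>. path_weight \<xi> (a # \<gamma>)) = (\<lambda>\<xi>. \<xi> a + path_weight \<xi> \<gamma>)"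
    by (simp add: path_weight_def)
  then show ?case using m Cons by simp
qed

lemma lpp_meas:
  assumes "sets \<nu> = sets borel" "vbox u v \<subseteq> K"
  shows "(\<lambda>\<xi>. lpp \<xi> u v) \<in> borel_measurable (PiM K (\<lambda>_. \<nu>))"
proof -
  have "(\<lambda>\<xi>. path_weight \<xi> \<gamma>) \<in> borel_measurable (PiM K (\<lambda>_. \<nu>))" if "\<gamma> \<in> directed_paths u v" for \<gamma>
  proof (rule path_weight_meas[OF assms(1)])
    show "set \<gamma> \<subseteq> K" using dp_box[OF that] assms(2) by (rule subset_trans)
  qed
  then show ?thesis unfolding lpp_def
    by (rule borel_measurable_Max[OF dp_finite])
qed

lemma lpp_chain:
  fixes S :: "nat \<Rightarrow> int"
  assumes S0: "S 0 = 0" and Sinc: "\<And>i. i < k \<Longrightarrow> S i < S (Suc i)" and k: "k \<ge> 1"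
    and nn: "\<And>p. \<xi> p \<ge> 0"
  shows "(\<Sum>i<k. lpp \<xi> (S i + 1, S i + 1) (S (Suc i), S (Suc i))) \<le> lpp \<xi> (1, 1) (S k, S k)"
  using Sinc k
proof (induction k)
  case 0 then show ?case by simp
next
  case (Suc k)
  show ?case
  proof (cases "k = 0")
    case True then show ?thesis using S0 by simp
  next
    case False
    note outer = Suc.prems(1)
    have ge: "S j \<ge> int j" if "j \<le> k" for j
      using that
    proof (induction j)
      case 0 then show ?case using S0 by simp
    next
      case (Suc j)
      then have "S j \<ge> int j" "S j < S (Suc j)" using outer by auto
      then show ?case by simp
    qed
    have IH: "(\<Sum>i<k. lpp \<xi> (S i + 1, S i + 1) (S (Suc i), S (Suc i))) \<le> lpp \<xi> (1, 1) (S k, S k)"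
      using Suc False by auto
    have "lpp \<xi> (1, 1) (S k, S k) + lpp \<xi> (S k + 1, S k + 1) (S (Suc k), S (Suc k)) \<le> lpp \<xi> (1, 1) (S (Suc k), S (Suc k))"
      using ge[of k] False Suc.prems(1)[of k] nn by (intro lpp_superadd) auto
    then show ?thesis using IH by simp
  qed
qed



lemma env_prob: "prob_space \<nu> \<Longrightarrow> prob_space (env \<nu>)"
  unfolding env_def by (rule prob_space_PiM) auto

lemma env_space: "sets \<nu> = sets borel \<Longrightarrow> space (env \<nu>) = UNIV"
  unfolding env_def space_PiM using sets_eq_imp_space_eq[of \<nu> borel] by simp

lemma shd_inj: "inj (shd d)"
  unfolding inj_on_def shd_def by (auto simp: prod_eq_iff)

lemma env_shift_meas: "(\<lambda>\<xi>. \<xi> \<circ> shd d) \<in> measurable (env \<nu>) (env \<nu>)"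
proof -
  have "(\<lambda>\<xi>. \<lambda>n\<in>UNIV. \<xi> (shd d n)) \<in> measurable (env \<nu>) (PiM UNIV (\<lambda>_. \<nu>))"
    unfolding env_def by (intro measurable_restrict measurable_component_singleton) auto
  then show ?thesis unfolding env_def restrict_UNIV by (simp add: comp_def)
qed

lemma env_shift:
  assumes "prob_space \<nu>"
  shows "distr (env \<nu>) (env \<nu>) (\<lambda>\<xi>. \<xi> \<circ> shd d) = env \<nu>"
proof -
  have "distr (PiM UNIV (\<lambda>_. \<nu>)) (\<Pi>\<^sub>M i\<in>UNIV. \<nu>) (\<lambda>\<omega>. \<lambda>n\<in>UNIV. \<omega> (shd d n)) = (\<Pi>\<^sub>M i\<in>UNIV. \<nu>)"
    using distr_PiM_reindex[of UNIV "\<lambda>_. \<nu>" "shd d" UNIV] assms shd_inj by auto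
  then show ?thesis unfolding env_def restrict_UNIV by (simp add: comp_def)
qed

lemma env_shift_measure:
  assumes "prob_space \<nu>" "B \<in> sets (env \<nu>)"
  shows "measure (env \<nu>) ((\<lambda>\<xi>. \<xi> \<circ> shd d) -` B \<inter> space (env \<nu>)) = measure (env \<nu>) B"
  using measure_distr[OF env_shift_meas assms(2), of d] env_shift[OF assms(1), of d] by simp

lemma env_coord_meas:
  assumes "sets \<nu> = sets borel"
  shows "(\<lambda>\<omega>. \<omega> i) \<in> measurable (env \<nu>) \<nu>"
  unfolding env_def by (rule measurable_component_singleton) auto

lemma env_indep_coords:
  assumes "prob_space \<nu>" "sets \<nu> = sets borel"
  shows "prob_space.indep_vars (env \<nu>) (\<lambda>_. \<nu>) (\<lambda>i \<omega>. \<omega> i) UNIV"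
proof -
  interpret E: prob_space "env \<nu>" using env_prob[OF assms(1)] .
  have "distr (env \<nu>) (\<Pi>\<^sub>M i\<in>UNIV. \<nu>) (\<lambda>x. \<lambda>i\<in>UNIV. x i) = (\<Pi>\<^sub>M i\<in>UNIV. distr (env \<nu>) \<nu> (\<lambda>\<omega>. \<omega> i))"
  proof -
    have "distr (env \<nu>) (\<Pi>\<^sub>M i\<in>UNIV. \<nu>) (\<lambda>x. \<lambda>i\<in>UNIV. x i) = env \<nu>"
      unfolding restrict_UNIV env_def by (simp add: distr_id2)
    moreover have "\<And>i. distr (env \<nu>) \<nu> (\<lambda>\<omega>. \<omega> i) = \<nu>"
      unfolding env_def using distr_PiM_component[of UNIV "\<lambda>_. \<nu>"] assms(1) by auto
    ultimately show ?thesis unfolding env_def by simp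
  qed
  then show ?thesis
    by (subst E.indep_vars_iff_distr_eq_PiM) (auto intro: env_coord_meas[OF assms(2)])
qed



lemma X_eq: "X n = (\<lambda>\<xi>. lpp \<xi> (1, 1) (int n, int n))"
  by (simp add: X_def fun_eq_iff)

lemma key:
  fixes msz :: "nat \<Rightarrow> nat" and t :: "nat \<Rightarrow> real" and \<delta> :: real
  assumes nu: "prob_space \<nu>" "sets \<nu> = sets borel" and nonneg: "AE x in \<nu>. 0 \<le> x"
    and k: "k \<ge> 1" and msz: "\<And>j. j < k \<Longrightarrow> msz j \<ge> 1" and r: "r = (\<Sum>j<k. msz j)"
    and pj: "\<And>j. j < k \<Longrightarrow> \<delta> \<le> measure (env \<nu>) {\<xi>\<in>space (env \<nu>). t j < X (msz j) \<xi>}"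
    and d0: "0 \<le> \<delta>"
  shows "\<delta> ^ k \<le> measure (env \<nu>) {\<xi>\<in>space (env \<nu>). (\<Sum>j<k. t j) \<le> X r \<xi>}"
proof -
  let ?E = "env \<nu>"
  interpret E: prob_space ?E using env_prob[OF nu(1)] .
  have sp: "space ?E = UNIV" using env_space[OF nu(2)] .
  define S where "S i = int (\<Sum>j<i. msz j)" for i
  have S0: "S 0 = 0" and SS: "\<And>i. S (Suc i) = S i + int (msz i)" by (simp_all add: S_def)
  have Sk: "S k = int r" using r S_def by simp
  have Smono: "S i \<le> S j" if "i \<le> j" for i j
    unfolding S_def using that by (intro of_nat_mono sum_mono2) auto
  have Sinc: "S i < S (Suc i)" if "i < k" for i using SS[of i] msz[OF that] by simp
  have Xm[measurable]: "X n \<in> borel_measurable ?E" for n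
    unfolding X_eq env_def by (rule lpp_meas[OF nu(2)]) auto
  define A where "A j = {\<xi>\<in>space ?E. t j < lpp \<xi> (S j + 1, S j + 1) (S (Suc j), S (Suc j))}" for j
  have Bm: "{\<xi>\<in>space ?E. t j < X (msz j) \<xi>} \<in> sets ?E" for j by measurable
  have lsh: "lpp \<xi> (S j + 1, S j + 1) (S (Suc j), S (Suc j)) = X (msz j) (\<xi> \<circ> shd (S j))" for \<xi> j
  proof -
    have "(S j + 1, S j + 1) = shd (S j) (1,1)" "(S (Suc j), S (Suc j)) = shd (S j) (int (msz j), int (msz j))"
      by (simp_all add: shd_def SS)
    then show ?thesis by (simp add: lpp_shift X_def)
  qed
  have PA: "\<delta> \<le> E.prob (A j)" if "j < k" for j
  proof -
    have "A j = (\<lambda>\<xi>. \<xi> \<circ> shd (S j)) -` {\<xi>\<in>space ?E. t j < X (msz j) \<xi>} \<inter> space ?E"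
      by (rule set_eqI) (simp add: A_def lsh sp)
    then have "E.prob (A j) = E.prob {\<xi>\<in>space ?E. t j < X (msz j) \<xi>}"
      using env_shift_measure[OF nu(1) Bm] by simp
    then show ?thesis using pj[OF that] by simp
  qed
  define K where "K j = vbox (S j + 1, S j + 1) (S (Suc j), S (Suc j))" for j
  have disj: "disjoint_family_on K {..<k}"
    unfolding disjoint_family_on_def
  proof (intro ballI impI)
    fix i j assume "i \<in> {..<k}" "j \<in> {..<k}" "i \<noteq> j"
    have *: "K a \<inter> K b = {}" if "a < b" for a b
    proof -
      have "S (Suc a) \<le> S b" using that Smono by simp
      have False if "p \<in> K a" "p \<in> K b" for p
      proof -
        have "fst p \<le> S (Suc a)" "S b + 1 \<le> fst p" using that unfolding K_def vbox_def by (auto simp: mem_Times_iff)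
        then show False using \<open>S (Suc a) \<le> S b\<close> by linarith
      qed
      then show ?thesis by blast
    qed
    show "K i \<inter> K j = {}"
    proof (cases "i < j")
      case True then show ?thesis using * by simp
    next
      case False then have "j < i" using \<open>i \<noteq> j\<close> by simp
      then show ?thesis using *[of j i] by blast
    qed
  qed
  have ind0: "E.indep_vars (\<lambda>_. \<nu>) (\<lambda>i \<omega>. \<omega> i) UNIV" using env_indep_coords[OF nu] .
  have ind1: "E.indep_vars (\<lambda>j. PiM (K j) (\<lambda>_. \<nu>)) (\<lambda>j \<omega>. restrict (\<lambda>i. \<omega> i) (K j)) {..<k}"
    by (rule E.indep_vars_restrict[OF ind0 _ disj]) auto
  have ind2: "E.indep_vars (\<lambda>_. borel) (\<lambda>j \<omega>. lpp (restrict (\<lambda>i. \<omega> i) (K j)) (S j + 1, S j + 1) (S (Suc j), S (Suc j))) {..<k}"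
    by (rule E.indep_vars_compose2[OF ind1]) (rule lpp_meas[OF nu(2)], simp add: K_def)
  have ind3: "E.indep_events (\<lambda>j. {x\<in>space ?E. t j < lpp (restrict (\<lambda>i. x i) (K j)) (S j + 1, S j + 1) (S (Suc j), S (Suc j))}) {..<k}"
    by (rule E.indep_eventsI_indep_vars[OF ind2]) simp
  have "(\<lambda>j. {x\<in>space ?E. t j < lpp (restrict (\<lambda>i. x i) (K j)) (S j + 1, S j + 1) (S (Suc j), S (Suc j))}) = A"
  proof
    fix j
    have "lpp (restrict (\<lambda>i. x i) (K j)) (S j + 1, S j + 1) (S (Suc j), S (Suc j)) = lpp x (S j + 1, S j + 1) (S (Suc j), S (Suc j))" for x
      by (rule lpp_cong) (simp add: K_def)
    then show "{x\<in>space ?E. t j < lpp (restrict (\<lambda>i. x i) (K j)) (S j + 1, S j + 1) (S (Suc j), S (Suc j))} = A j"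
      unfolding A_def by simp
  qed
  with ind3 have ind: "E.indep_events A {..<k}" by simp
  have "E.prob (\<Inter>j\<in>{..<k}. A j) = (\<Prod>j\<in>{..<k}. E.prob (A j))"
  proof -
    have "\<forall>J\<subseteq>{..<k}. J \<noteq> {} \<longrightarrow> finite J \<longrightarrow> E.prob (\<Inter>j\<in>J. A j) = (\<Prod>j\<in>J. E.prob (A j))"
      using ind unfolding E.indep_events_def by blast
    moreover have "{..<k} \<noteq> {}" using k by (simp add: lessThan_empty_iff)
    ultimately show ?thesis by blast
  qed
  moreover have "(\<Prod>j\<in>{..<k}. \<delta>) \<le> (\<Prod>j\<in>{..<k}. E.prob (A j))"
    using PA d0 by (intro prod_mono) auto
  ultimately have P1: "\<delta> ^ k \<le> E.prob (\<Inter>j\<in>{..<k}. A j)" by simp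
  have AEnn: "AE \<xi> in ?E. \<forall>p. 0 \<le> \<xi> p"
    unfolding AE_all_countable
  proof
    fix p :: vertex
    show "AE \<xi> in ?E. 0 \<le> \<xi> p"
      unfolding env_def using nonneg nu(1) by (intro AE_PiM_component) auto
  qed
  have "AE \<xi> in ?E. \<xi> \<in> (\<Inter>j\<in>{..<k}. A j) \<longrightarrow> \<xi> \<in> {\<xi>\<in>space ?E. (\<Sum>j<k. t j) \<le> X r \<xi>}"
    using AEnn
  proof eventually_elim
    case (elim \<xi>)
    show ?case
    proof
      assume a: "\<xi> \<in> (\<Inter>j\<in>{..<k}. A j)"
      have "(\<Sum>j<k. t j) \<le> (\<Sum>j<k. lpp \<xi> (S j + 1, S j + 1) (S (Suc j), S (Suc j)))"
        using a unfolding A_def by (intro sum_mono) (auto intro: less_imp_le)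
      also have "\<dots> \<le> lpp \<xi> (1, 1) (S k, S k)"
        by (rule lpp_chain[OF S0 Sinc k]) (use elim in auto)
      also have "\<dots> = X r \<xi>" using Sk by (simp add: X_def)
      finally show "\<xi> \<in> {\<xi>\<in>space ?E. (\<Sum>j<k. t j) \<le> X r \<xi>}" using sp by simp
    qed
  qed
  then have "E.prob (\<Inter>j\<in>{..<k}. A j) \<le> E.prob {\<xi>\<in>space ?E. (\<Sum>j<k. t j) \<le> X r \<xi>}"
    by (rule E.finite_measure_mono_AE) measurable
  with P1 show ?thesis by linarith
qed



lemma cube_powr: "0 \<le> (x::real) \<Longrightarrow> (x powr (1/3)) ^ 3 = x"
  using root_powr_inverse[of 3 x] real_root_pow_pos2[of 3 x] by simp

lemma sq_powr32: "0 \<le> (x::real) \<Longrightarrow> (x powr (3/2)) ^ 2 = x ^ 3"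
proof -
  assume x: "0 \<le> x"
  have "(x powr (3/2)) ^ 2 = x powr (3/2) * x powr (3/2)" by (simp add: power2_eq_square)
  also have "\<dots> = x powr (of_nat 3)" using x by (simp add: powr_add[symmetric])
  also have "\<dots> = x ^ 3" using x by (rule powr_realpow') simp
  finally show ?thesis .
qed

lemma powr_23_32: "0 \<le> (x::real) \<Longrightarrow> (x powr (2/3)) powr (3/2) = x"
  by (simp add: powr_powr)

lemma sum_ind: "j0 \<le> k \<Longrightarrow> (\<Sum>j<k. (if j < j0 then 1 else 0::nat)) = j0"
proof -
  assume "j0 \<le> k"
  then have "{..<k} \<inter> {j. j < j0} = {..<j0}" by auto
  then show ?thesis by (simp add: sum.If_cases)
qed

theorem theorem2:
  fixes \<nu> :: "real measure" and \<mu> :: real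
  assumes law: "prob_space \<nu>" "sets \<nu> = sets borel"
    and nonneg: "AE x in \<nu>. 0 \<le> x"
    and integ: "\<And>r. r \<ge> 1 \<Longrightarrow> integrable (env \<nu>) (X r)"
    and mu: "(\<lambda>r. (\<integral>\<xi>. X r \<xi> \<partial>env \<nu>) / real r) \<longlonglongrightarrow> \<mu>"
    and hyp_i: "\<exists>g1 g2. 0 < g1 \<and> 0 < g2 \<and>
       (\<forall>\<^sub>F r in sequentially.
          \<mu> * real r - g1 * real r powr (1/3) \<le> (\<integral>\<xi>. X r \<xi> \<partial>env \<nu>) \<and>
          (\<integral>\<xi>. X r \<xi> \<partial>env \<nu>) \<le> \<mu> * real r - g2 * real r powr (1/3))"
    and hyp_ii: "\<exists>\<delta> C r1. 0 < \<delta> \<and> 0 < C \<and>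
       (\<forall>r::nat. r > r1 \<longrightarrow>
          measure (env \<nu>) {\<xi> \<in> space (env \<nu>). X r \<xi> - \<mu> * real r > C * real r powr (1/3)} \<ge> \<delta>)"
  shows "\<exists>c \<eta> \<theta>0 r0. 0 < c \<and> 0 < \<eta> \<and> 0 \<le> \<theta>0 \<and>
       (\<forall>r::nat. \<forall>\<theta>::real. r > r0 \<and> \<theta>0 < \<theta> \<and> \<theta> < \<eta> * real r powr (2/3) \<longrightarrow>
          measure (env \<nu>) {\<xi> \<in> space (env \<nu>).
             X r \<xi> - (\<integral>\<xi>'. X r \<xi>' \<partial>env \<nu>) \<ge> \<theta> * real r powr (1/3)}
          \<ge> exp (- c * \<theta> powr (3/2)))"
proof -
  let ?E = "env \<nu>"
  interpret E: prob_space ?E using env_prob[OF law(1)] .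
  have sp: "space ?E = UNIV" using env_space[OF law(2)] .
  have Xm[measurable]: "X n \<in> borel_measurable ?E" for n
    unfolding X_eq env_def by (rule lpp_meas[OF law(2)]) auto
  obtain \<delta> C and r1 :: nat where d: "0 < \<delta>" and C: "0 < C"
    and h2: "\<And>r::nat. r > r1 \<Longrightarrow> measure ?E {\<xi> \<in> space ?E. X r \<xi> - \<mu> * real r > C * real r powr (1/3)} \<ge> \<delta>"
    using hyp_ii by blast
  from hyp_i obtain g1 g2 where g2: "0 < g2" and ev0: "\<forall>\<^sub>F r in sequentially.
          \<mu> * real r - g1 * real r powr (1/3) \<le> (\<integral>\<xi>. X r \<xi> \<partial>env \<nu>) \<and>
          (\<integral>\<xi>. X r \<xi> \<partial>env \<nu>) \<le> \<mu> * real r - g2 * real r powr (1/3)" by blast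
  have ev: "\<forall>\<^sub>F r in sequentially. (\<integral>\<xi>. X r \<xi> \<partial>?E) \<le> \<mu> * real r - g2 * real r powr (1/3)"
    using ev0 by eventually_elim simp
  have ev': "\<forall>\<^sub>F r in sequentially. (\<integral>\<xi>. X r \<xi> \<partial>?E) \<le> \<mu> * real r"
    using ev proof eventually_elim
    case (elim r) have "0 \<le> g2 * real r powr (1/3)" using g2 by simp
    then show ?case using elim by linarith
  qed
  then obtain N where hN: "\<And>r. r \<ge> N \<Longrightarrow> (\<integral>\<xi>. X r \<xi> \<partial>?E) \<le> \<mu> * real r"
    unfolding eventually_sequentially by blast
  have d1: "\<delta> \<le> 1" using h2[of "Suc r1"] E.prob_le_1 by (meson order_trans lessI)
  define a where "a = sqrt (2 / C ^ 3)"
  have a0: "0 < a" unfolding a_def using C by simp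
  have a2: "a ^ 2 = 2 / C ^ 3" unfolding a_def using C by simp
  define q where "q = 1 / (2 * (real r1 + 1) * (a + 1))"
  have q0: "0 < q" unfolding q_def using a0 by simp
  define \<eta> where "\<eta> = q powr (2/3)"
  define c where "c = (a + 1) * (- ln \<delta>) + 1"
  have ln0: "ln \<delta> \<le> 0" using d d1 by simp
  have c0: "0 < c" proof -
    have "0 \<le> (a + 1) * (- ln \<delta>)" using ln0 a0 by (intro mult_nonneg_nonneg) auto
    then show ?thesis unfolding c_def by linarith
  qed
  have main: "exp (- c * \<theta> powr (3/2)) \<le> measure ?E {\<xi> \<in> space ?E. X r \<xi> - (\<integral>\<xi>'. X r \<xi>' \<partial>?E) \<ge> \<theta> * real r powr (1/3)}"
    if r: "r > N" and th: "1 < \<theta>" "\<theta> < \<eta> * real r powr (2/3)" for r \<theta>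
  proof -
    define T where "T = \<theta> powr (3/2)"
    have T1: "1 \<le> T" unfolding T_def using th by (simp add: ge_one_powr_ge_zero)
    have rpos: "0 < real r" using r by simp
    have "T < (\<eta> * real r powr (2/3)) powr (3/2)"
      unfolding T_def using th by (intro powr_less_mono2) auto
    also have "\<dots> = q * real r"
      unfolding \<eta>_def using q0 rpos by (simp add: powr_mult powr_23_32)
    finally have Tr: "T < q * real r" .
    define k where "k = nat \<lceil>a * T\<rceil>"
    have aT: "0 < a * T" using a0 T1 by simp
    have kk: "real k = real_of_int \<lceil>a * T\<rceil>" unfolding k_def using aT by simp
    have kge: "a * T \<le> real k" using kk ceiling_correct[of "a * T"] by linarith
    have kle: "real k < a * T + 1" using kk ceiling_correct[of "a * T"] by linarith
    have k1: "k \<ge> 1"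
    proof (rule ccontr)
      assume "\<not> k \<ge> 1" then have "k = 0" by simp
      then show False using kge aT by simp
    qed
    have kaT: "real k \<le> (a + 1) * T" using kle T1 by (simp add: algebra_simps)
    have kq: "real k < (a + 1) * (q * real r)" using kaT Tr a0 by (smt (verit) mult_strict_left_mono)
    have pos: "0 < 2 * (real r1 + 1)" by simp
    have hq: "2 * (real r1 + 1) * ((a + 1) * q) = 1"
    proof -
      have "0 < 2 * (real r1 + 1) * (a + 1)" using a0 by simp
      then show ?thesis unfolding q_def using a0 by (simp add: mult.assoc)
    qed
    have "2 * (real r1 + 1) * real k < 2 * (real r1 + 1) * ((a + 1) * (q * real r))"
      using mult_strict_left_mono[OF kq pos] .
    also have "\<dots> = (2 * (real r1 + 1) * ((a + 1) * q)) * real r" by (simp add: algebra_simps)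
    also have "\<dots> = real r" using hq by simp
    finally have "2 * (real r1 + 1) * real k < real r" .
    then have "real (2 * (r1 + 1) * k) < real r" by (simp only: of_nat_mult of_nat_add of_nat_1 of_nat_numeral)
    then have kr: "2 * (r1 + 1) * k < r" by (simp only: of_nat_less_iff)
    define m where "m = r div k"
    define j0 where "j0 = r mod k"
    have rkm: "r = k * m + j0" unfolding m_def j0_def by simp
    have j0k: "j0 < k" unfolding j0_def using k1 by simp
    have m_ge: "2 * (r1 + 1) \<le> m"
    proof -
      have "(2 * (r1 + 1) * k) div k \<le> r div k" using kr by (intro div_le_mono) simp
      then show ?thesis unfolding m_def using k1 by simp
    qed
    define msz where "msz j = m + (if j < j0 then 1 else 0)" for j
    have msum: "(\<Sum>j<k. msz j) = r"
      unfolding msz_def sum.distrib using sum_ind[of j0 k] j0k rkm by simp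
    define t where "t j = \<mu> * real (msz j) + C * real (msz j) powr (1/3)" for j
    have pj: "\<delta> \<le> measure ?E {\<xi>\<in>space ?E. t j < X (msz j) \<xi>}" if "j < k" for j
    proof -
      have "msz j > r1" unfolding msz_def using m_ge by simp
      from h2[OF this] show ?thesis unfolding t_def by (simp add: algebra_simps)
    qed
    have K: "\<delta> ^ k \<le> measure ?E {\<xi>\<in>space ?E. (\<Sum>j<k. t j) \<le> X r \<xi>}"
      by (rule key[OF law nonneg k1 _ msum[symmetric] pj]) (use d m_ge in \<open>auto simp: msz_def\<close>)
    have kT2: "(a * T) ^ 2 \<le> real k ^ 2" using kge aT by (intro power_mono) auto
    have "(a * T) ^ 2 = 2 / C ^ 3 * \<theta> ^ 3"
      using a2 sq_powr32[of \<theta>] th unfolding T_def by (simp add: power_mult_distrib)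
    with kT2 have "2 / C ^ 3 * \<theta> ^ 3 \<le> real k ^ 2" by simp
    then have Ck: "2 * \<theta> ^ 3 \<le> C ^ 3 * real k ^ 2" using C by (simp add: field_simps)
    have "1 \<le> m" using m_ge by simp
    then have "k \<le> k * m" by simp
    then have "r \<le> 2 * k * m" using rkm j0k by linarith
    then have "real r \<le> real (2 * k * m)" by (simp only: of_nat_le_iff)
    then have rkm2: "real r \<le> 2 * real k * real m" by simp
    have "\<theta> ^ 3 * real r \<le> \<theta> ^ 3 * (2 * real k * real m)"
      using rkm2 th by (intro mult_left_mono) auto
    also have "\<dots> = (2 * \<theta> ^ 3) * (real k * real m)" by simp
    also have "\<dots> \<le> (C ^ 3 * real k ^ 2) * (real k * real m)"
      using Ck by (intro mult_right_mono) auto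
    also have "\<dots> = (C * real k * real m powr (1/3)) ^ 3"
      using cube_powr[of "real m"] by (simp add: power_mult_distrib power2_eq_square power3_eq_cube)
    finally have "(\<theta> * real r powr (1/3)) ^ 3 \<le> (C * real k * real m powr (1/3)) ^ 3"
      using cube_powr[of "real r"] by (simp add: power_mult_distrib)
    then have c3: "(\<theta> * real r powr (1/3)) ^ Suc 2 \<le> (C * real k * real m powr (1/3)) ^ Suc 2"
      by simp
    have "0 \<le> C * real k * real m powr (1/3)" using C by simp
    with c3 have thC: "\<theta> * real r powr (1/3) \<le> C * real k * real m powr (1/3)"
      by (rule power_le_imp_le_base)
    have "(\<Sum>j<k. real m powr (1/3)) \<le> (\<Sum>j<k. real (msz j) powr (1/3))"
      by (intro sum_mono powr_mono2) (auto simp: msz_def)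
    then have sC: "C * real k * real m powr (1/3) \<le> C * (\<Sum>j<k. real (msz j) powr (1/3))"
      using C by (simp add: mult.assoc)
    have st: "(\<Sum>j<k. t j) = \<mu> * real r + C * (\<Sum>j<k. real (msz j) powr (1/3))"
    proof -
      have "(\<Sum>j<k. t j) = \<mu> * (\<Sum>j<k. real (msz j)) + C * (\<Sum>j<k. real (msz j) powr (1/3))"
        unfolding t_def by (simp add: sum.distrib sum_distrib_left)
      also have "(\<Sum>j<k. real (msz j)) = real r" using msum by (simp flip: of_nat_sum)
      finally show ?thesis .
    qed
    have EX: "(\<integral>\<xi>. X r \<xi> \<partial>?E) \<le> \<mu> * real r" using hN r by simp
    have sub: "{\<xi>\<in>space ?E. (\<Sum>j<k. t j) \<le> X r \<xi>} \<subseteq> {\<xi> \<in> space ?E. X r \<xi> - (\<integral>\<xi>'. X r \<xi>' \<partial>?E) \<ge> \<theta> * real r powr (1/3)}"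
    proof -
      have "\<theta> * real r powr (1/3) \<le> X r \<xi> - (\<integral>\<xi>'. X r \<xi>' \<partial>?E)" if "(\<Sum>j<k. t j) \<le> X r \<xi>" for \<xi>
        using that st EX thC sC by linarith
      then show ?thesis by blast
    qed
    have meas2: "E.prob {\<xi>\<in>space ?E. (\<Sum>j<k. t j) \<le> X r \<xi>} \<le> E.prob {\<xi> \<in> space ?E. X r \<xi> - (\<integral>\<xi>'. X r \<xi>' \<partial>?E) \<ge> \<theta> * real r powr (1/3)}"
      by (rule E.finite_measure_mono[OF sub]) measurable
    have "exp (- c * \<theta> powr (3/2)) \<le> \<delta> ^ k"
    proof -
      have "real k * ln \<delta> \<ge> ((a + 1) * T) * ln \<delta>"
        using kaT ln0 by (intro mult_right_mono_neg) auto
      moreover have "- c * T \<le> ((a + 1) * T) * ln \<delta>"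
      proof -
        have "- c * T = ((a + 1) * T) * ln \<delta> - T" unfolding c_def by (simp add: algebra_simps)
        then show ?thesis using T1 by linarith
      qed
      ultimately have "- c * T \<le> real k * ln \<delta>" by linarith
      then have "exp (- c * T) \<le> exp (real k * ln \<delta>)" by simp
      also have "exp (real k * ln \<delta>) = \<delta> ^ k" using d by (simp add: exp_of_nat_mult)
      finally show ?thesis unfolding T_def .
    qed
    with K meas2 show ?thesis by linarith
  qed
  show ?thesis
    apply (rule exI[of _ c], rule exI[of _ \<eta>], rule exI[of _ 1], rule exI[of _ N])
    using c0 q0 main by (auto simp: \<eta>_def)
qed

end
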